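(* For $k=1,2$ let $p_k,q_k\ge0$ be integers, $l_k=p_k+q_k$, $f_k\in\mathfrak H^{\odot p_k}\otimes\mathfrak H^{\odot q_k}$, and let $h_k$ be the reverse complex conjugate of $f_k$. Then for $0\le i\le p_1\wedge q_2$ and $0\le j\le q_1\wedge p_2$, $$\|f_1\tilde\otimes_{i,j}f_2\|_{\mathfrak H^{\otimes(l_1+l_2-2(i+j))}}\le\|f_1\otimes_{i,j}f_2\|_{\mathfrak H^{\otimes(l_1+l_2-2(i+j))}}\le\|f_1\|_{\mathfrak H^{\otimes l_1}}\|f_2\|_{\mathfrak H^{\otimes l_2}},$$ and $$\|f_1\otimes_{i,j}f_2\|^2_{\mathfrak H^{\otimes(l_1+l_2-2(i+j))}}\le\frac12\|f_1\otimes_{p_1-i,q_1-j}h_1\|^2_{\mathfrak H^{\otimes 2(i+j)}}+\frac12\|f_2\otimes_{p_2-j,q_2-i}h_2\|^2_{\mathfrak H^{\otimes 2(i+j)}}.$$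
   Context: Let $\mathfrak H$ be a complex separable Hilbert space with orthonormal basis $\{e_k\}_{k\ge1}$, and let $Z=\{Z(h):h\in\mathfrak H\}$ be a complex isonormal Gaussian process: a centered symmetric complex Gaussian family with $\mathbb E[Z(h)^2]=0$ and $\mathbb E[Z(g)\overline{Z(h)}]=\langle g,h\rangle_{\mathfrak H}$. The complex Hermite polynomials $H_{p,q}$ are defined by $\exp\{\lambda\bar z+\bar\lambda z-2|\lambda|^2\}=\sum_{p,q\ge0}\frac{\bar\lambda^p\lambda^q}{p!q!}H_{p,q}(z)$. The complex multiple Wiener–Itô integral $I_{p,q}$ on $\mathfrak H^{\odot p}\otimes\mathfrak H^{\odot q}$ is determined by $I_{p,q}\big((\tilde\otimes_k e_k^{\otimes p_k})\otimes(\tilde\otimes_k\overline{e_k}^{\otimes q_k})\big)=\prod_k 2^{-(p_k+q_k)/2}H_{p_k,q_k}(\sqrt2 Z(e_k))$ ($\sum p_k=p,\sum q_k=q$), extended linearly and continuously. The reverse complex conjugate of $f\in\mathfrak H^{\odot p}\otimes\mathfrak H^{\odot q}$ is the $h\in\mathfrak H^{\odot q}\otimes\mathfrak H^{\odot p}$ with $\overline{I_{p,q}(f)}=I_{q,p}(h)$ (for $\mathfrak H=L^2_{\mathbb C}(T,\mu)$: $h(t_1..t_q;s_1..s_p)=\overline{f(s_1..s_p;t_1..t_q)}$). For $f\in\mathfrak H^{\odot a}\otimes\mathfrak H^{\odot b}$, $g\in\mathfrak H^{\odot c}\otimes\mathfrak H^{\odot d}$, $0\le i\le a\wedge d$, $0\le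 j\le b\wedge c$, the contraction is $f\otimes_{i,j}g=\sum_{l_1,\dots,l_{i+j}}\langle f,e_{l_1}\otimes\cdots\otimes e_{l_i}\otimes\overline{e_{l_{i+1}}}\otimes\cdots\otimes\overline{e_{l_{i+j}}}\rangle\otimes\langle g,e_{l_{i+1}}\otimes\cdots\otimes e_{l_{i+j}}\otimes\overline{e_{l_1}}\otimes\cdots\otimes\overline{e_{l_i}}\rangle\in\mathfrak H^{\otimes(a+c-i-j)}\otimes\mathfrak H^{\otimes(b+d-i-j)}$; for $\mathfrak H=L^2_{\mathbb C}$, $f\otimes_{i,j}g(t_1..t_{a+c-i-j};s_1..s_{b+d-i-j})=\int f(t_1..t_{a-i},u_1..u_i;s_1..s_{b-j},v_1..v_j)\,g(t_{a-i+1}..t_{a+c-i-j},v_1..v_j;s_{b-j+1}..s_{b+d-i-j},u_1..u_i)\,d\vec u\,d\vec v$. $f\otimes_{0,0}g=f\otimes g$. $f\tilde\otimes_{i,j}g$ denotes the symmetrization of $f\otimes_{i,j}g$ (separately in its first $a+c-i-j$ and last $b+d-i-j$ arguments). *)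

theory Defs
  imports "HOL-Analysis.Analysis"
begin

text \<open>
  The Hilbert space H has an orthonormal basis indexed by a
  countable type 'b. An element f of H^{tensor a} tensor H^{tensor b} is represented by
  its coordinate array F (k, m) = inner product of f with
  e_{k_1} ... e_{k_a} tensor conj(e_{m_1}) ... conj(e_{m_b}),
  where k, m are lists of basis indices of length a and b. Only values on
  index lists of the right lengths are relevant.
\<close>

definition idx :: "nat \<Rightarrow> nat \<Rightarrow> ('b list \<times> 'b list) set" where
  "idx a b = {(k, m). length k = a \<and> length m = b}"

definition in_tensor :: "nat \<Rightarrow> nat \<Rightarrow> ('b list \<times> 'b list \<Rightarrow> complex) \<Rightarrow> bool" where
  "in_tensor a b F \<longleftrightarrow> (\<lambda>(k, m). (cmod (F (k, m)))\<^sup>2) summable_on idx a b"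

definition perm_list :: "(nat \<Rightarrow> nat) \<Rightarrow> 'b list \<Rightarrow> 'b list" where
  "perm_list \<sigma> xs = map (\<lambda>i. xs ! \<sigma> i) [0..<length xs]"

definition in_sym_tensor :: "nat \<Rightarrow> nat \<Rightarrow> ('b list \<times> 'b list \<Rightarrow> complex) \<Rightarrow> bool" where
  "in_sym_tensor a b F \<longleftrightarrow> in_tensor a b F \<and>
     (\<forall>k m \<sigma> \<tau>. length k = a \<longrightarrow> length m = b \<longrightarrow> \<sigma> permutes {..<a} \<longrightarrow> \<tau> permutes {..<b}
        \<longrightarrow> F (perm_list \<sigma> k, perm_list \<tau> m) = F (k, m))"

definition tnorm :: "nat \<Rightarrow> nat \<Rightarrow> ('b list \<times> 'b list \<Rightarrow> complex) \<Rightarrow> real" where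
  "tnorm a b F = sqrt (\<Sum>\<^sub>\<infinity>(k, m)\<in>idx a b. (cmod (F (k, m)))\<^sup>2)"

definition rev_conj :: "('b list \<times> 'b list \<Rightarrow> complex) \<Rightarrow> ('b list \<times> 'b list \<Rightarrow> complex)" where
  "rev_conj F = (\<lambda>(m, k). cnj (F (k, m)))"

text \<open>Contraction f tensor_{i,j} g for f of type (a,b), g of type (c,d); result of type
  (a+c-i-j, b+d-i-j):
  (f tensor_{i,j} g)(t t'; s s') = sum over u (length i), v (length j) of
   F(t u; s v) G(t' v; s' u), |t| = a-i, |s| = b-j.\<close>
definition contr :: "nat \<Rightarrow> nat \<Rightarrow> nat \<Rightarrow> nat \<Rightarrow>
    ('b list \<times> 'b list \<Rightarrow> complex) \<Rightarrow> ('b list \<times> 'b list \<Rightarrow> complex) \<Rightarrow>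
    ('b list \<times> 'b list \<Rightarrow> complex)" where
  "contr a b i j F G = (\<lambda>(x, y).
     \<Sum>\<^sub>\<infinity>(u, v)\<in>idx i j.
       F (take (a - i) x @ u, take (b - j) y @ v) * G (drop (a - i) x @ v, drop (b - j) y @ u))"

definition symmetrize :: "nat \<Rightarrow> nat \<Rightarrow> ('b list \<times> 'b list \<Rightarrow> complex) \<Rightarrow> ('b list \<times> 'b list \<Rightarrow> complex)" where
  "symmetrize n m C = (\<lambda>(x, y). (1 / of_nat (fact n * fact m)) *
     (\<Sum>\<sigma>\<in>{\<sigma>. \<sigma> permutes {..<n}}. \<Sum>\<tau>\<in>{\<tau>. \<tau> permutes {..<m}}. C (perm_list \<sigma> x, perm_list \<tau> y)))"

end

theory Submission
  imports Defs
begin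

lemma ab_le_sq: fixes a b :: real assumes "0 \<le> a" "0 \<le> b" shows "a * b \<le> a\<^sup>2 + b\<^sup>2"
proof -
  have "0 \<le> (a - b)\<^sup>2" by simp
  hence "2*a*b \<le> a\<^sup>2 + b\<^sup>2" by (simp add: power2_diff)
  moreover have "0 \<le> a*b" using assms by simp
  ultimately show ?thesis by linarith
qed

lemma ab_le_half: fixes a b :: real shows "a * b \<le> (1/2) * a\<^sup>2 + (1/2) * b\<^sup>2"
proof -
  have "0 \<le> (a - b)\<^sup>2" by simp
  thus ?thesis by (simp add: power2_diff)
qed

lemma ab_le_half': fixes a b :: real shows "a * b \<le> a\<^sup>2 / 2 + b\<^sup>2 / 2"
  using ab_le_half[of a b] by simp

lemma infsum_div_const: "(\<Sum>\<^sub>\<infinity>x\<in>A. f x / (c::real)) = infsum f A / c"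
  by (simp add: divide_inverse infsum_cmult_left')

lemma prod_abs_summable:
  fixes f :: "'a \<Rightarrow> 'c::{real_normed_field,banach}" and g :: "'b \<Rightarrow> 'c"
  assumes f: "(\<lambda>x. norm (f x)) summable_on A" and g: "(\<lambda>x. norm (g x)) summable_on B"
  shows "(\<lambda>z. norm (case z of (x,y) \<Rightarrow> f x * g y)) summable_on A \<times> B"
proof -
  have "(\<lambda>z. norm (case z of (x,y) \<Rightarrow> f x * g y)) summable_on Sigma A (\<lambda>_. B)"
  proof (subst Infinite_Sum.abs_summable_on_Sigma_iff, intro conjI ballI)
    fix x assume "x \<in> A"
    show "(\<lambda>y. norm (case (x, y) of (x, y) \<Rightarrow> f x * g y)) summable_on B"
      using summable_on_cmult_right[OF g, of "norm (f x)"] by (simp add: norm_mult)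
  next
    have "(\<lambda>x. norm (f x) * (\<Sum>\<^sub>\<infinity>y\<in>B. norm (g y))) summable_on A"
      using summable_on_cmult_left[OF f] by simp
    moreover have "\<And>x. norm (\<Sum>\<^sub>\<infinity>y\<in>B. norm (case (x, y) of (x, y) \<Rightarrow> f x * g y)) = norm (f x) * (\<Sum>\<^sub>\<infinity>y\<in>B. norm (g y))"
      by (simp add: norm_mult infsum_cmult_right' infsum_nonneg)
    ultimately show "(\<lambda>x. norm (\<Sum>\<^sub>\<infinity>y\<in>B. norm (case (x, y) of (x, y) \<Rightarrow> f x * g y))) summable_on A"
      by simp
  qed
  thus ?thesis by simp
qed

lemma prod_infsum:
  fixes f :: "'a \<Rightarrow> 'c::{real_normed_field,banach}" and g :: "'b \<Rightarrow> 'c"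
  assumes f: "(\<lambda>x. norm (f x)) summable_on A" and g: "(\<lambda>x. norm (g x)) summable_on B"
  shows "(\<Sum>\<^sub>\<infinity>(x,y)\<in>A\<times>B. f x * g y) = infsum f A * infsum g B"
proof -
  have s: "(\<lambda>(x,y). f x * g y) summable_on A \<times> B"
    using abs_summable_summable[OF prod_abs_summable[OF f g]] .
  have "(\<Sum>\<^sub>\<infinity>(x,y)\<in>A\<times>B. f x * g y) = (\<Sum>\<^sub>\<infinity>x\<in>A. \<Sum>\<^sub>\<infinity>y\<in>B. f x * g y)"
    using infsum_Sigma'_banach[of "\<lambda>x y. f x * g y" A "\<lambda>_. B"] s by simp
  also have "\<dots> = (\<Sum>\<^sub>\<infinity>x\<in>A. f x * infsum g B)"
    by (simp add: infsum_cmult_right')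
  also have "\<dots> = infsum f A * infsum g B" by (simp add: infsum_cmult_left')
  finally show ?thesis .
qed

lemma cs_infsum:
  fixes f g :: "'w \<Rightarrow> complex"
  assumes f: "(\<lambda>w. (cmod (f w))\<^sup>2) summable_on W" and g: "(\<lambda>w. (cmod (g w))\<^sup>2) summable_on W"
  shows cs_infsum_abs: "(\<lambda>w. norm (f w * g w)) summable_on W"
    and cs_infsum_le: "(cmod (\<Sum>\<^sub>\<infinity>w\<in>W. f w * g w))\<^sup>2 \<le> (\<Sum>\<^sub>\<infinity>w\<in>W. (cmod (f w))\<^sup>2) * (\<Sum>\<^sub>\<infinity>w\<in>W. (cmod (g w))\<^sup>2)"
proof -
  show abs: "(\<lambda>w. norm (f w * g w)) summable_on W"
    apply (rule Infinite_Sum.abs_summable_on_comparison_test'[OF summable_on_add[OF f g]])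
    by (simp add: norm_mult ab_le_sq)
  define Sf where "Sf = (\<Sum>\<^sub>\<infinity>w\<in>W. (cmod (f w))\<^sup>2)"
  define Sg where "Sg = (\<Sum>\<^sub>\<infinity>w\<in>W. (cmod (g w))\<^sup>2)"
  have Sf0: "0 \<le> Sf" unfolding Sf_def by (simp add: infsum_nonneg)
  have Sg0: "0 \<le> Sg" unfolding Sg_def by (simp add: infsum_nonneg)
  have "(\<Sum>\<^sub>\<infinity>w\<in>W. cmod (f w * g w)) \<le> sqrt Sf * sqrt Sg"
  proof (rule infsum_le_finite_sums[OF abs])
    fix F assume F: "finite F" "F \<subseteq> W"
    have cs: "(\<Sum>w\<in>F. cmod (f w) * cmod (g w))\<^sup>2 \<le> (\<Sum>w\<in>F. (cmod (f w))\<^sup>2) * (\<Sum>w\<in>F. (cmod (g w))\<^sup>2)"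
      by (rule Cauchy_Schwarz_ineq_sum)
    have "(\<Sum>w\<in>F. (cmod (f w))\<^sup>2) \<le> Sf" unfolding Sf_def
      by (rule finite_sum_le_infsum[OF f F(1) F(2)]) simp
    moreover have "(\<Sum>w\<in>F. (cmod (g w))\<^sup>2) \<le> Sg" unfolding Sg_def
      by (rule finite_sum_le_infsum[OF g F(1) F(2)]) simp
    ultimately have "(\<Sum>w\<in>F. (cmod (f w))\<^sup>2) * (\<Sum>w\<in>F. (cmod (g w))\<^sup>2) \<le> Sf * Sg"
      using Sf0 Sg0 by (intro mult_mono) (auto intro: sum_nonneg)
    with cs have "(\<Sum>w\<in>F. cmod (f w) * cmod (g w))\<^sup>2 \<le> Sf * Sg" by linarith
    hence "sqrt ((\<Sum>w\<in>F. cmod (f w) * cmod (g w))\<^sup>2) \<le> sqrt (Sf * Sg)" by (rule real_sqrt_le_mono)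
    moreover have "(\<Sum>w\<in>F. cmod (f w) * cmod (g w)) \<ge> 0" by (intro sum_nonneg) simp
    ultimately show "(\<Sum>w\<in>F. cmod (f w * g w)) \<le> sqrt Sf * sqrt Sg"
      by (simp add: norm_mult real_sqrt_mult)
  qed
  moreover have "cmod (\<Sum>\<^sub>\<infinity>w\<in>W. f w * g w) \<le> (\<Sum>\<^sub>\<infinity>w\<in>W. cmod (f w * g w))"
    by (rule norm_infsum_bound[OF abs])
  ultimately have "cmod (\<Sum>\<^sub>\<infinity>w\<in>W. f w * g w) \<le> sqrt Sf * sqrt Sg" by linarith
  hence "(cmod (\<Sum>\<^sub>\<infinity>w\<in>W. f w * g w))\<^sup>2 \<le> (sqrt Sf * sqrt Sg)\<^sup>2"
    by (intro power_mono) auto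
  also have "\<dots> = Sf * Sg" using Sf0 Sg0 by (simp add: power_mult_distrib)
  finally show "(cmod (\<Sum>\<^sub>\<infinity>w\<in>W. f w * g w))\<^sup>2 \<le> Sf * Sg" .
qed

lemma sq_row:
  fixes A :: "'x \<Rightarrow> 'w \<Rightarrow> complex"
  assumes A: "(\<lambda>(x,w). (cmod (A x w))\<^sup>2) summable_on X \<times> W" and x: "x \<in> X"
  shows "(\<lambda>w. (cmod (A x w))\<^sup>2) summable_on W"
  using summable_on_SigmaD1[where f="\<lambda>x w. (cmod (A x w))\<^sup>2", OF A x] .

lemma sq_swap:
  fixes B :: "'w \<Rightarrow> 'y \<Rightarrow> complex"
  assumes B: "(\<lambda>(w,y). (cmod (B w y))\<^sup>2) summable_on W \<times> Y"
  shows "(\<lambda>(y,w). (cmod (B w y))\<^sup>2) summable_on Y \<times> W"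
  using B by (subst summable_on_swap) (simp add: case_prod_unfold)

lemma sq_col:
  fixes B :: "'w \<Rightarrow> 'y \<Rightarrow> complex"
  assumes B: "(\<lambda>(w,y). (cmod (B w y))\<^sup>2) summable_on W \<times> Y" and y: "y \<in> Y"
  shows "(\<lambda>w. (cmod (B w y))\<^sup>2) summable_on W"
  using summable_on_SigmaD1[where f="\<lambda>y w. (cmod (B w y))\<^sup>2", OF sq_swap[OF B] y] .

lemma real_nonneg_abs:
  fixes f :: "'a \<Rightarrow> real"
  assumes "f summable_on A" "\<And>x. f x \<ge> 0"
  shows "(\<lambda>x. norm (f x)) summable_on A"
  using assms by simp

lemma hs_prod:
  fixes A :: "'x \<Rightarrow> 'w \<Rightarrow> complex" and B :: "'w \<Rightarrow> 'y \<Rightarrow> complex"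
  assumes A: "(\<lambda>(x,w). (cmod (A x w))\<^sup>2) summable_on X \<times> W"
      and B: "(\<lambda>(w,y). (cmod (B w y))\<^sup>2) summable_on W \<times> Y"
  shows hs_prod_summable: "(\<lambda>(x,y). (cmod (\<Sum>\<^sub>\<infinity>w\<in>W. A x w * B w y))\<^sup>2) summable_on X \<times> Y"
    and hs_prod_le: "(\<Sum>\<^sub>\<infinity>(x,y)\<in>X\<times>Y. (cmod (\<Sum>\<^sub>\<infinity>w\<in>W. A x w * B w y))\<^sup>2)
           \<le> (\<Sum>\<^sub>\<infinity>(x,w)\<in>X\<times>W. (cmod (A x w))\<^sup>2) * (\<Sum>\<^sub>\<infinity>(w,y)\<in>W\<times>Y. (cmod (B w y))\<^sup>2)"
proof -
  define a where "a x = (\<Sum>\<^sub>\<infinity>w\<in>W. (cmod (A x w))\<^sup>2)" for x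
  define b where "b y = (\<Sum>\<^sub>\<infinity>w\<in>W. (cmod (B w y))\<^sup>2)" for y
  have a0: "a x \<ge> 0" for x unfolding a_def by (simp add: infsum_nonneg)
  have b0: "b y \<ge> 0" for y unfolding b_def by (simp add: infsum_nonneg)
  have as: "a summable_on X"
    unfolding a_def using summable_on_Sigma_banach[where f="\<lambda>x w. (cmod (A x w))\<^sup>2", OF A] .
  have ai: "infsum a X = (\<Sum>\<^sub>\<infinity>(x,w)\<in>X\<times>W. (cmod (A x w))\<^sup>2)"
    unfolding a_def using infsum_Sigma'_banach[where f="\<lambda>x w. (cmod (A x w))\<^sup>2", OF A] .
  have bs: "b summable_on Y"
    unfolding b_def using summable_on_Sigma_banach[where f="\<lambda>y w. (cmod (B w y))\<^sup>2", OF sq_swap[OF B]] .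
  have bi: "infsum b Y = (\<Sum>\<^sub>\<infinity>(w,y)\<in>W\<times>Y. (cmod (B w y))\<^sup>2)"
    unfolding b_def
    using infsum_swap_banach[where f="\<lambda>w y. (cmod (B w y))\<^sup>2", OF B]
      infsum_Sigma'_banach[where f="\<lambda>w y. (cmod (B w y))\<^sup>2", OF B] by simp
  have ps: "(\<lambda>(x,y). a x * b y) summable_on X \<times> Y"
    using abs_summable_summable[OF prod_abs_summable[OF real_nonneg_abs[OF as a0] real_nonneg_abs[OF bs b0]]]
    by (simp add: case_prod_unfold)
  have pi: "(\<Sum>\<^sub>\<infinity>(x,y)\<in>X\<times>Y. a x * b y) = infsum a X * infsum b Y"
    using prod_infsum[OF real_nonneg_abs[OF as a0] real_nonneg_abs[OF bs b0]] .
  have pt: "(cmod (\<Sum>\<^sub>\<infinity>w\<in>W. A x w * B w y))\<^sup>2 \<le> a x * b y" if "x \<in> X" "y \<in> Y" for x y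
    unfolding a_def b_def using cs_infsum_le[OF sq_row[OF A that(1)] sq_col[OF B that(2)]] .
  show S: "(\<lambda>(x,y). (cmod (\<Sum>\<^sub>\<infinity>w\<in>W. A x w * B w y))\<^sup>2) summable_on X \<times> Y"
    by (rule summable_on_comparison_test[OF ps]) (auto intro: pt)
  have "(\<Sum>\<^sub>\<infinity>(x,y)\<in>X\<times>Y. (cmod (\<Sum>\<^sub>\<infinity>w\<in>W. A x w * B w y))\<^sup>2) \<le> (\<Sum>\<^sub>\<infinity>(x,y)\<in>X\<times>Y. a x * b y)"
    by (rule infsum_mono[OF S ps]) (auto intro: pt)
  thus "(\<Sum>\<^sub>\<infinity>(x,y)\<in>X\<times>Y. (cmod (\<Sum>\<^sub>\<infinity>w\<in>W. A x w * B w y))\<^sup>2)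
           \<le> (\<Sum>\<^sub>\<infinity>(x,w)\<in>X\<times>W. (cmod (A x w))\<^sup>2) * (\<Sum>\<^sub>\<infinity>(w,y)\<in>W\<times>Y. (cmod (B w y))\<^sup>2)"
    using pi ai bi by simp
qed

lemma hs_third:
  fixes A :: "'x \<Rightarrow> 'w \<Rightarrow> complex" and B :: "'w \<Rightarrow> 'y \<Rightarrow> complex"
  assumes A: "(\<lambda>(x,w). (cmod (A x w))\<^sup>2) summable_on X \<times> W"
      and B: "(\<lambda>(w,y). (cmod (B w y))\<^sup>2) summable_on W \<times> Y"
  shows "(\<Sum>\<^sub>\<infinity>(x,y)\<in>X\<times>Y. (cmod (\<Sum>\<^sub>\<infinity>w\<in>W. A x w * B w y))\<^sup>2)
    \<le> (1/2) * (\<Sum>\<^sub>\<infinity>(w,w')\<in>W\<times>W. (cmod (\<Sum>\<^sub>\<infinity>x\<in>X. cnj (A x w) * A x w'))\<^sup>2)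
     + (1/2) * (\<Sum>\<^sub>\<infinity>(w,w')\<in>W\<times>W. (cmod (\<Sum>\<^sub>\<infinity>y\<in>Y. B w y * cnj (B w' y)))\<^sup>2)"
proof -
  define P where "P w w' = (\<Sum>\<^sub>\<infinity>x\<in>X. cnj (A x w) * A x w')" for w w'
  define Q where "Q w w' = (\<Sum>\<^sub>\<infinity>y\<in>Y. B w y * cnj (B w' y))" for w w'
  define C where "C x y = (\<Sum>\<^sub>\<infinity>w\<in>W. A x w * B w y)" for x y
  define G where "G x y w w' = A x w * B w y * (cnj (A x w') * cnj (B w' y))" for x y w w'
  have Ac: "(\<lambda>(w,x). (cmod (cnj (A x w)))\<^sup>2) summable_on W \<times> X"
    using sq_swap[OF A] by simp
  have Bc: "(\<lambda>(y,w). (cmod (cnj (B w y)))\<^sup>2) summable_on Y \<times> W"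
    using sq_swap[OF B] by simp
  have Ps: "(\<lambda>(w,w'). (cmod (P w w'))\<^sup>2) summable_on W \<times> W"
    unfolding P_def using hs_prod_summable[OF Ac A] .
  have Qs: "(\<lambda>(w,w'). (cmod (Q w w'))\<^sup>2) summable_on W \<times> W"
    unfolding Q_def using hs_prod_summable[OF B Bc] .
  have CS: "(\<lambda>(x,y). (cmod (C x y))\<^sup>2) summable_on X \<times> Y"
    unfolding C_def using hs_prod_summable[OF A B] .
  have step1: "C x y * cnj (C x y) = (\<Sum>\<^sub>\<infinity>(w,w')\<in>W\<times>W. G x y w w')" if x: "x \<in> X" and y: "y \<in> Y" for x y
  proof -
    have f: "(\<lambda>w. norm (A x w * B w y)) summable_on W"
      using cs_infsum_abs[OF sq_row[OF A x] sq_col[OF B y]] .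
    have g: "(\<lambda>w. norm (cnj (A x w) * cnj (B w y))) summable_on W"
      using f by (simp add: norm_mult)
    have "cnj (C x y) = (\<Sum>\<^sub>\<infinity>w\<in>W. cnj (A x w) * cnj (B w y))"
      unfolding C_def by (simp flip: infsum_cnj)
    hence "C x y * cnj (C x y) = (\<Sum>\<^sub>\<infinity>w\<in>W. A x w * B w y) * (\<Sum>\<^sub>\<infinity>w\<in>W. cnj (A x w) * cnj (B w y))"
      unfolding C_def by simp
    also have "\<dots> = (\<Sum>\<^sub>\<infinity>(w,w')\<in>W\<times>W. A x w * B w y * (cnj (A x w') * cnj (B w' y)))"
      using prod_infsum[OF f g] by simp
    finally show ?thesis unfolding G_def .
  qed
  have H1: "(\<lambda>((x,y),(w,w')). (cmod (A x w))\<^sup>2 * (cmod (B w' y))\<^sup>2) summable_on (X\<times>Y)\<times>(W\<times>W)"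
  proof -
    have "(\<lambda>z. norm (case z of (p,q) \<Rightarrow> (case p of (x,w) \<Rightarrow> (cmod (A x w))\<^sup>2) * (case q of (w',y) \<Rightarrow> (cmod (B w' y))\<^sup>2))) summable_on (X\<times>W)\<times>(W\<times>Y)"
      by (rule prod_abs_summable) (use A B in \<open>simp_all add: case_prod_unfold\<close>)
    hence T: "(\<lambda>((x,w),(w',y)). (cmod (A x w))\<^sup>2 * (cmod (B w' y))\<^sup>2) summable_on (X\<times>W)\<times>(W\<times>Y)"
      by (simp add: case_prod_unfold)
    show ?thesis
      apply (subst summable_on_reindex_bij_witness[where j="\<lambda>((x,y),(w,w')). ((x,w),(w',y))"
            and i="\<lambda>((x,w),(w',y)). ((x,y),(w,w'))" and T="(X\<times>W)\<times>(W\<times>Y)"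
            and h="\<lambda>((x,w),(w',y)). (cmod (A x w))\<^sup>2 * (cmod (B w' y))\<^sup>2"])
      using T by auto
  qed
  have H2: "(\<lambda>((x,y),(w,w')). (cmod (A x w'))\<^sup>2 * (cmod (B w y))\<^sup>2) summable_on (X\<times>Y)\<times>(W\<times>W)"
  proof -
    have "(\<lambda>z. norm (case z of (p,q) \<Rightarrow> (case p of (x,w) \<Rightarrow> (cmod (A x w))\<^sup>2) * (case q of (w',y) \<Rightarrow> (cmod (B w' y))\<^sup>2))) summable_on (X\<times>W)\<times>(W\<times>Y)"
      by (rule prod_abs_summable) (use A B in \<open>simp_all add: case_prod_unfold\<close>)
    hence T: "(\<lambda>((x,w),(w',y)). (cmod (A x w))\<^sup>2 * (cmod (B w' y))\<^sup>2) summable_on (X\<times>W)\<times>(W\<times>Y)"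
      by (simp add: case_prod_unfold)
    show ?thesis
      apply (subst summable_on_reindex_bij_witness[where j="\<lambda>((x,y),(w,w')). ((x,w'),(w,y))"
            and i="\<lambda>((x,w'),(w,y)). ((x,y),(w,w'))" and T="(X\<times>W)\<times>(W\<times>Y)"
            and h="\<lambda>((x,w),(w',y)). (cmod (A x w))\<^sup>2 * (cmod (B w' y))\<^sup>2"])
      using T by auto
  qed
  have Gb: "norm (G x y w w') \<le> (1/2) * ((cmod (A x w))\<^sup>2 * (cmod (B w' y))\<^sup>2) + (1/2) * ((cmod (A x w'))\<^sup>2 * (cmod (B w y))\<^sup>2)" for x y w w'
  proof -
    have "norm (G x y w w') = (cmod (A x w) * cmod (B w' y)) * (cmod (A x w') * cmod (B w y))"
      unfolding G_def by (simp add: norm_mult)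
    also have "\<dots> \<le> (1/2) * (cmod (A x w) * cmod (B w' y))\<^sup>2 + (1/2) * (cmod (A x w') * cmod (B w y))\<^sup>2"
      by (rule ab_le_half)
    finally show ?thesis by (simp add: power_mult_distrib)
  qed
  have Gs: "(\<lambda>((x,y),(w,w')). G x y w w') summable_on (X\<times>Y)\<times>(W\<times>W)"
  proof -
    have "(\<lambda>z. norm ((\<lambda>((x,y),(w,w')). G x y w w') z)) summable_on (X\<times>Y)\<times>(W\<times>W)"
      by (rule Infinite_Sum.abs_summable_on_comparison_test'[OF summable_on_add[OF summable_on_cmult_right[OF H1, of "1/2"] summable_on_cmult_right[OF H2, of "1/2"]]])
         (clarsimp, rule order_trans[OF Gb], simp)
    thus ?thesis by (rule abs_summable_summable)
  qed
  have step2: "(\<Sum>\<^sub>\<infinity>(x,y)\<in>X\<times>Y. \<Sum>\<^sub>\<infinity>(w,w')\<in>W\<times>W. G x y w w') = (\<Sum>\<^sub>\<infinity>(w,w')\<in>W\<times>W. \<Sum>\<^sub>\<infinity>(x,y)\<in>X\<times>Y. G x y w w')"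
    using infsum_swap_banach[where f="\<lambda>(x,y) (w,w'). G x y w w'" and A="X\<times>Y" and B="W\<times>W"] Gs
    by (simp add: case_prod_unfold)
  have step3: "(\<Sum>\<^sub>\<infinity>(x,y)\<in>X\<times>Y. G x y w w') = cnj (P w w') * Q w w'" if w: "w \<in> W" and w': "w' \<in> W" for w w'
  proof -
    have f: "(\<lambda>x. norm (A x w * cnj (A x w'))) summable_on X"
      using cs_infsum_abs[OF sq_col[OF A w], of "\<lambda>x. cnj (A x w')"] sq_col[OF A w'] by simp
    have g: "(\<lambda>y. norm (B w y * cnj (B w' y))) summable_on Y"
      using cs_infsum_abs[OF sq_row[OF B w], of "\<lambda>y. cnj (B w' y)"] sq_row[OF B w'] by simp
    have "(\<Sum>\<^sub>\<infinity>(x,y)\<in>X\<times>Y. G x y w w') = (\<Sum>\<^sub>\<infinity>(x,y)\<in>X\<times>Y. (A x w * cnj (A x w')) * (B w y * cnj (B w' y)))"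
      unfolding G_def by (simp add: ac_simps)
    also have "\<dots> = (\<Sum>\<^sub>\<infinity>x\<in>X. A x w * cnj (A x w')) * (\<Sum>\<^sub>\<infinity>y\<in>Y. B w y * cnj (B w' y))"
      using prod_infsum[OF f g] .
    also have "(\<Sum>\<^sub>\<infinity>x\<in>X. A x w * cnj (A x w')) = cnj (P w w')"
      unfolding P_def by (simp flip: infsum_cnj add: mult.commute)
    finally show ?thesis unfolding Q_def .
  qed
  have hs0: "((\<lambda>z. complex_of_real ((\<lambda>(x,y). (cmod (C x y))\<^sup>2) z)) has_sum
          complex_of_real (\<Sum>\<^sub>\<infinity>(x,y)\<in>X\<times>Y. (cmod (C x y))\<^sup>2)) (X\<times>Y)"
    by (rule has_sum_of_real[OF has_sum_infsum[OF CS]])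
  have "complex_of_real (\<Sum>\<^sub>\<infinity>(x,y)\<in>X\<times>Y. (cmod (C x y))\<^sup>2) = (\<Sum>\<^sub>\<infinity>(x,y)\<in>X\<times>Y. C x y * cnj (C x y))"
  proof -
    have eqf: "(\<lambda>z. complex_of_real ((\<lambda>(x,y). (cmod (C x y))\<^sup>2) z)) = (\<lambda>(x,y). C x y * cnj (C x y))"
      by (rule ext) (simp only: case_prod_unfold complex_norm_square)
    have "((\<lambda>(x,y). C x y * cnj (C x y)) has_sum complex_of_real (\<Sum>\<^sub>\<infinity>(x,y)\<in>X\<times>Y. (cmod (C x y))\<^sup>2)) (X\<times>Y)"
      using hs0 unfolding eqf .
    from infsumI[OF this] show ?thesis by (rule sym)
  qed
  also have "\<dots> = (\<Sum>\<^sub>\<infinity>(x,y)\<in>X\<times>Y. \<Sum>\<^sub>\<infinity>(w,w')\<in>W\<times>W. G x y w w')"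
    by (rule infsum_cong) (auto simp: step1)
  also have "\<dots> = (\<Sum>\<^sub>\<infinity>(w,w')\<in>W\<times>W. cnj (P w w') * Q w w')"
    unfolding step2 by (rule infsum_cong) (auto simp: step3)
  finally have eq: "complex_of_real (\<Sum>\<^sub>\<infinity>(x,y)\<in>X\<times>Y. (cmod (C x y))\<^sup>2) = (\<Sum>\<^sub>\<infinity>(w,w')\<in>W\<times>W. cnj (P w w') * Q w w')" .
  have PQ: "(\<lambda>z. norm ((\<lambda>(w,w'). cnj (P w w') * Q w w') z)) summable_on W\<times>W"
  proof (rule Infinite_Sum.abs_summable_on_comparison_test'[OF summable_on_add[OF summable_on_cmult_right[OF Ps, of "1/2"] summable_on_cmult_right[OF Qs, of "1/2"]]])
    fix z assume "z \<in> W\<times>W"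
    obtain w w' where z: "z = (w,w')" by (metis prod.collapse)
    show "norm ((\<lambda>(w,w'). cnj (P w w') * Q w w') z) \<le> (1/2) * (case z of (w,w') \<Rightarrow> (cmod (P w w'))\<^sup>2) + (1/2) * (case z of (w,w') \<Rightarrow> (cmod (Q w w'))\<^sup>2)"
      unfolding z by (simp add: norm_mult ab_le_half ab_le_half')
  qed
  have "(\<Sum>\<^sub>\<infinity>(x,y)\<in>X\<times>Y. (cmod (C x y))\<^sup>2) = cmod (complex_of_real (\<Sum>\<^sub>\<infinity>(x,y)\<in>X\<times>Y. (cmod (C x y))\<^sup>2))"
  proof -
    have "0 \<le> (\<Sum>\<^sub>\<infinity>(x,y)\<in>X\<times>Y. (cmod (C x y))\<^sup>2)"
      by (rule infsum_nonneg) auto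
    thus ?thesis by simp
  qed
  also have "\<dots> \<le> (\<Sum>\<^sub>\<infinity>z\<in>W\<times>W. norm ((\<lambda>(w,w'). cnj (P w w') * Q w w') z))"
    unfolding eq using norm_infsum_bound[OF PQ] by (simp add: case_prod_unfold)
  also have "\<dots> \<le> (\<Sum>\<^sub>\<infinity>z\<in>W\<times>W. (1/2) * (case z of (w,w') \<Rightarrow> (cmod (P w w'))\<^sup>2) + (1/2) * (case z of (w,w') \<Rightarrow> (cmod (Q w w'))\<^sup>2))"
    by (rule infsum_mono[OF PQ summable_on_add[OF summable_on_cmult_right[OF Ps, of "1/2"] summable_on_cmult_right[OF Qs, of "1/2"]]])
       (auto simp: norm_mult ab_le_half ab_le_half')
  also have "\<dots> = (1/2) * (\<Sum>\<^sub>\<infinity>(w,w')\<in>W\<times>W. (cmod (P w w'))\<^sup>2) + (1/2) * (\<Sum>\<^sub>\<infinity>(w,w')\<in>W\<times>W. (cmod (Q w w'))\<^sup>2)"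
    by (subst infsum_add[OF summable_on_cmult_right[OF Ps, of "1/2"] summable_on_cmult_right[OF Qs, of "1/2"]])
       (simp add: infsum_cmult_right' case_prod_unfold infsum_div_const)
  finally show ?thesis unfolding P_def Q_def C_def .
qed

lemma perm_list_length[simp]: "length (perm_list \<sigma> xs) = length xs"
  by (simp add: perm_list_def)

lemma perm_list_nth: "i < length xs \<Longrightarrow> perm_list \<sigma> xs ! i = xs ! \<sigma> i"
  by (simp add: perm_list_def)

lemma perm_list_inv1:
  assumes "\<sigma> permutes {..<n}" "length xs = n"
  shows "perm_list (inv \<sigma>) (perm_list \<sigma> xs) = xs"
proof (rule nth_equalityI)
  fix i assume i: "i < length (perm_list (inv \<sigma>) (perm_list \<sigma> xs))"
  hence i': "i < n" using assms by simp
  have "inv \<sigma> i < n" using permutes_in_image[OF permutes_inv[OF assms(1)]] i' by simp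
  thus "perm_list (inv \<sigma>) (perm_list \<sigma> xs) ! i = xs ! i"
    using i' assms by (simp add: perm_list_nth permutes_inverses(1)[OF assms(1)])
qed simp

lemma perm_list_inv2:
  assumes "\<sigma> permutes {..<n}" "length xs = n"
  shows "perm_list \<sigma> (perm_list (inv \<sigma>) xs) = xs"
proof (rule nth_equalityI)
  fix i assume i: "i < length (perm_list \<sigma> (perm_list (inv \<sigma>) xs))"
  hence i': "i < n" using assms by simp
  have "\<sigma> i < n" using permutes_in_image[OF assms(1)] i' by simp
  thus "perm_list \<sigma> (perm_list (inv \<sigma>) xs) ! i = xs ! i"
    using i' assms by (simp add: perm_list_nth permutes_inverses(2)[OF assms(1)])
qed simp

lemma reindex_perm:
  fixes f :: "'b list \<times> 'b list \<Rightarrow> real"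
  assumes \<sigma>: "\<sigma> permutes {..<n}" and \<tau>: "\<tau> permutes {..<m}"
  shows "(\<lambda>(x,y). f (perm_list \<sigma> x, perm_list \<tau> y)) summable_on idx n m \<longleftrightarrow> f summable_on idx n m"
    and "(\<Sum>\<^sub>\<infinity>(x,y)\<in>idx n m. f (perm_list \<sigma> x, perm_list \<tau> y)) = infsum f (idx n m)"
proof -
  note w = perm_list_inv1[OF \<sigma>] perm_list_inv2[OF \<sigma>] perm_list_inv1[OF \<tau>] perm_list_inv2[OF \<tau>]
  show "(\<lambda>(x,y). f (perm_list \<sigma> x, perm_list \<tau> y)) summable_on idx n m \<longleftrightarrow> f summable_on idx n m"
    by (rule summable_on_reindex_bij_witness[where j="\<lambda>(x,y). (perm_list \<sigma> x, perm_list \<tau> y)"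
          and i="\<lambda>(x,y). (perm_list (inv \<sigma>) x, perm_list (inv \<tau>) y)"]) (auto simp: idx_def w)
  show "(\<Sum>\<^sub>\<infinity>(x,y)\<in>idx n m. f (perm_list \<sigma> x, perm_list \<tau> y)) = infsum f (idx n m)"
    by (rule infsum_reindex_bij_witness[where j="\<lambda>(x,y). (perm_list \<sigma> x, perm_list \<tau> y)"
          and i="\<lambda>(x,y). (perm_list (inv \<sigma>) x, perm_list (inv \<tau>) y)"]) (auto simp: idx_def w)
qed

lemma infsum_finite_sum:
  fixes f :: "'k \<Rightarrow> 'a \<Rightarrow> real"
  assumes "finite K" "\<And>k. k \<in> K \<Longrightarrow> f k summable_on A"
  shows "(\<lambda>x. \<Sum>k\<in>K. f k x) summable_on A \<and> infsum (\<lambda>x. \<Sum>k\<in>K. f k x) A = (\<Sum>k\<in>K. infsum (f k) A)"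
  using assms
proof (induction K rule: finite_induct)
  case empty then show ?case by simp
next
  case (insert k K)
  have a: "f k summable_on A" using insert by simp
  have b: "(\<lambda>x. \<Sum>k\<in>K. f k x) summable_on A" and c: "infsum (\<lambda>x. \<Sum>k\<in>K. f k x) A = (\<Sum>k\<in>K. infsum (f k) A)"
    using insert by auto
  show ?case using insert(1,2) summable_on_add[OF a b] infsum_add[OF a b] c by simp
qed

lemma sym_bound:
  fixes C :: "'b list \<times> 'b list \<Rightarrow> complex"
  assumes S: "(\<lambda>(x,y). (cmod (C (x,y)))\<^sup>2) summable_on idx n m"
  shows "(\<Sum>\<^sub>\<infinity>(x,y)\<in>idx n m. (cmod (symmetrize n m C (x,y)))\<^sup>2) \<le> (\<Sum>\<^sub>\<infinity>(x,y)\<in>idx n m. (cmod (C (x,y)))\<^sup>2)"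
proof -
  define PP where "PP = {\<sigma>. \<sigma> permutes {..<n}} \<times> {\<tau>. \<tau> permutes {..<m}}"
  have fin: "finite PP" unfolding PP_def by (simp add: finite_permutations)
  have card: "card PP = fact n * fact m" unfolding PP_def
    by (simp add: card_cartesian_product card_permutations)
  define N where "N = real (fact n * fact m)"
  have N0: "N > 0" unfolding N_def by simp
  have cardN: "real (card PP) = N" unfolding N_def card ..
  define c where "c x y p = C (perm_list (fst p) x, perm_list (snd p) y)" for x y p
  define g where "g z = (1/N) * (\<Sum>p\<in>PP. (cmod (c (fst z) (snd z) p))\<^sup>2)" for z
  have symeq: "symmetrize n m C (x,y) = (1 / of_real N) * (\<Sum>p\<in>PP. c x y p)" for x y
    unfolding symmetrize_def c_def PP_def N_def by (simp add: sum.cartesian_product case_prod_unfold)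
  have pt: "(cmod (symmetrize n m C (x,y)))\<^sup>2 \<le> g (x,y)" for x y
  proof -
    have "(\<Sum>p\<in>PP. cmod (c x y p) * 1)\<^sup>2 \<le> (\<Sum>p\<in>PP. (cmod (c x y p))\<^sup>2) * (\<Sum>p\<in>PP. 1\<^sup>2)"
      by (rule Cauchy_Schwarz_ineq_sum)
    hence cs: "(\<Sum>p\<in>PP. cmod (c x y p))\<^sup>2 \<le> N * (\<Sum>p\<in>PP. (cmod (c x y p))\<^sup>2)"
      using cardN by (simp add: mult.commute)
    have "cmod (\<Sum>p\<in>PP. c x y p) \<le> (\<Sum>p\<in>PP. cmod (c x y p))" by (rule norm_sum)
    hence "(cmod (\<Sum>p\<in>PP. c x y p))\<^sup>2 \<le> (\<Sum>p\<in>PP. cmod (c x y p))\<^sup>2"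
      by (intro power_mono) auto
    with cs have le: "(cmod (\<Sum>p\<in>PP. c x y p))\<^sup>2 \<le> N * (\<Sum>p\<in>PP. (cmod (c x y p))\<^sup>2)" by linarith
    have "(cmod (symmetrize n m C (x,y)))\<^sup>2 = (cmod (\<Sum>p\<in>PP. c x y p))\<^sup>2 / N\<^sup>2"
      unfolding symeq using N0 by (simp add: norm_mult norm_divide power_divide)
    also have "\<dots> \<le> N * (\<Sum>p\<in>PP. (cmod (c x y p))\<^sup>2) / N\<^sup>2"
      using le N0 by (intro divide_right_mono) auto
    also have "\<dots> = g (x,y)" unfolding g_def using N0 by (simp add: power2_eq_square)
    finally show ?thesis .
  qed
  have each: "(\<lambda>z. (cmod (c (fst z) (snd z) p))\<^sup>2) summable_on idx n m \<and>
      (\<Sum>\<^sub>\<infinity>z\<in>idx n m. (cmod (c (fst z) (snd z) p))\<^sup>2) = (\<Sum>\<^sub>\<infinity>(x,y)\<in>idx n m. (cmod (C (x,y)))\<^sup>2)"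
    if p: "p \<in> PP" for p
  proof -
    have \<sigma>: "fst p permutes {..<n}" and \<tau>: "snd p permutes {..<m}" using p unfolding PP_def by auto
    have e: "(\<lambda>z. (cmod (c (fst z) (snd z) p))\<^sup>2) = (\<lambda>(x,y). (\<lambda>z. (cmod (C z))\<^sup>2) (perm_list (fst p) x, perm_list (snd p) y))"
      unfolding c_def by (auto simp: fun_eq_iff)
    have S': "(\<lambda>z. (cmod (C z))\<^sup>2) summable_on idx n m" using S by (simp add: case_prod_unfold)
    show ?thesis unfolding e
      using reindex_perm[OF \<sigma> \<tau>, of "\<lambda>z. (cmod (C z))\<^sup>2"] S' by (simp add: case_prod_unfold)
  qed
  have gs: "g summable_on idx n m" and gi: "infsum g (idx n m) = (\<Sum>\<^sub>\<infinity>(x,y)\<in>idx n m. (cmod (C (x,y)))\<^sup>2)"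
  proof -
    have fs: "(\<lambda>z. \<Sum>p\<in>PP. (cmod (c (fst z) (snd z) p))\<^sup>2) summable_on idx n m \<and>
        infsum (\<lambda>z. \<Sum>p\<in>PP. (cmod (c (fst z) (snd z) p))\<^sup>2) (idx n m) = (\<Sum>p\<in>PP. (\<Sum>\<^sub>\<infinity>z\<in>idx n m. (cmod (c (fst z) (snd z) p))\<^sup>2))"
      by (rule infsum_finite_sum[OF fin]) (use each in blast)
    show "g summable_on idx n m" unfolding g_def using summable_on_cmult_right fs by blast
    have "infsum g (idx n m) = (1/N) * (\<Sum>p\<in>PP. (\<Sum>\<^sub>\<infinity>z\<in>idx n m. (cmod (c (fst z) (snd z) p))\<^sup>2))"
      unfolding g_def using fs by (simp add: infsum_cmult_right' infsum_div_const)
    also have "\<dots> = (1/N) * (\<Sum>p\<in>PP. (\<Sum>\<^sub>\<infinity>(x,y)\<in>idx n m. (cmod (C (x,y)))\<^sup>2))"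
      using each by simp
    also have "\<dots> = (\<Sum>\<^sub>\<infinity>(x,y)\<in>idx n m. (cmod (C (x,y)))\<^sup>2)" using cardN N0 by simp
    finally show "infsum g (idx n m) = (\<Sum>\<^sub>\<infinity>(x,y)\<in>idx n m. (cmod (C (x,y)))\<^sup>2)" .
  qed
  have SS: "(\<lambda>(x,y). (cmod (symmetrize n m C (x,y)))\<^sup>2) summable_on idx n m"
    by (rule summable_on_comparison_test[OF gs]) (auto intro: pt)
  have "(\<Sum>\<^sub>\<infinity>(x,y)\<in>idx n m. (cmod (symmetrize n m C (x,y)))\<^sup>2) \<le> infsum g (idx n m)"
    by (rule infsum_mono[OF SS gs]) (auto intro: pt)
  thus ?thesis using gi by simp
qed

lemma rot_perm:
  fixes r n :: nat
  assumes "r \<le> n"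
  shows "(\<lambda>i. if i < n then (if i < n - r then i + r else i - (n - r)) else i) permutes {..<n}"
proof (rule bij_imp_permutes)
  show "bij_betw (\<lambda>i. if i < n then (if i < n - r then i + r else i - (n - r)) else i) {..<n} {..<n}"
    by (rule bij_betwI[where g="\<lambda>i. if i < n then (if i < r then i + (n - r) else i - r) else i"])
       (use assms in auto)
qed auto

lemma rot_list:
  assumes "length xs = r" "length xs + length ys = n"
  shows "perm_list (\<lambda>i. if i < n then (if i < n - r then i + r else i - (n - r)) else i) (xs @ ys) = ys @ xs"
  by (rule nth_equalityI) (use assms in \<open>auto simp: perm_list_def nth_append\<close>)

lemma sym_swap:
  assumes F: "in_sym_tensor a b F"
    and k: "length k1 + length k2 = a" and m: "length m1 + length m2 = b"
  shows "F (k1 @ k2, m1 @ m2) = F (k2 @ k1, m2 @ m1)"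
proof -
  define \<sigma> where "\<sigma> = (\<lambda>i. if i < a then (if i < a - length k1 then i + length k1 else i - (a - length k1)) else i)"
  define \<tau> where "\<tau> = (\<lambda>i. if i < b then (if i < b - length m1 then i + length m1 else i - (b - length m1)) else i)"
  have \<sigma>p: "\<sigma> permutes {..<a}" unfolding \<sigma>_def by (rule rot_perm) (use k in auto)
  have \<tau>p: "\<tau> permutes {..<b}" unfolding \<tau>_def by (rule rot_perm) (use m in auto)
  have "perm_list \<sigma> (k1 @ k2) = k2 @ k1" unfolding \<sigma>_def by (rule rot_list) (use k in auto)
  moreover have "perm_list \<tau> (m1 @ m2) = m2 @ m1" unfolding \<tau>_def by (rule rot_list) (use m in auto)
  moreover have "F (perm_list \<sigma> (k1 @ k2), perm_list \<tau> (m1 @ m2)) = F (k1 @ k2, m1 @ m2)"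
    using F \<sigma>p \<tau>p k m unfolding in_sym_tensor_def by auto
  ultimately show ?thesis by simp
qed

lemma reidx_A:
  fixes F :: "'b list \<times> 'b list \<Rightarrow> complex"
  assumes "i \<le> a" "j \<le> b"
  shows "(\<lambda>(x,w). (cmod (F (fst x @ fst w, snd x @ snd w)))\<^sup>2) summable_on idx (a-i) (b-j) \<times> idx i j
           \<longleftrightarrow> (\<lambda>(k,m). (cmod (F (k,m)))\<^sup>2) summable_on idx a b"
    and "(\<Sum>\<^sub>\<infinity>(x,w)\<in>idx (a-i) (b-j) \<times> idx i j. (cmod (F (fst x @ fst w, snd x @ snd w)))\<^sup>2)
           = (\<Sum>\<^sub>\<infinity>(k,m)\<in>idx a b. (cmod (F (k,m)))\<^sup>2)"
proof -
  show "(\<lambda>(x,w). (cmod (F (fst x @ fst w, snd x @ snd w)))\<^sup>2) summable_on idx (a-i) (b-j) \<times> idx i j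
           \<longleftrightarrow> (\<lambda>(k,m). (cmod (F (k,m)))\<^sup>2) summable_on idx a b"
    by (rule summable_on_reindex_bij_witness[where j="\<lambda>(x,w). (fst x @ fst w, snd x @ snd w)"
          and i="\<lambda>(k,m). ((take (a-i) k, take (b-j) m), (drop (a-i) k, drop (b-j) m))"])
       (use assms in \<open>auto simp: idx_def\<close>)
  show "(\<Sum>\<^sub>\<infinity>(x,w)\<in>idx (a-i) (b-j) \<times> idx i j. (cmod (F (fst x @ fst w, snd x @ snd w)))\<^sup>2)
           = (\<Sum>\<^sub>\<infinity>(k,m)\<in>idx a b. (cmod (F (k,m)))\<^sup>2)"
    by (rule infsum_reindex_bij_witness[where j="\<lambda>(x,w). (fst x @ fst w, snd x @ snd w)"
          and i="\<lambda>(k,m). ((take (a-i) k, take (b-j) m), (drop (a-i) k, drop (b-j) m))"])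
       (use assms in \<open>auto simp: idx_def\<close>)
qed

lemma reidx_B:
  fixes F :: "'b list \<times> 'b list \<Rightarrow> complex"
  assumes "i \<le> d" "j \<le> c"
  shows "(\<lambda>(w,y). (cmod (F (fst y @ snd w, snd y @ fst w)))\<^sup>2) summable_on idx i j \<times> idx (c-j) (d-i)
           \<longleftrightarrow> (\<lambda>(k,m). (cmod (F (k,m)))\<^sup>2) summable_on idx c d"
    and "(\<Sum>\<^sub>\<infinity>(w,y)\<in>idx i j \<times> idx (c-j) (d-i). (cmod (F (fst y @ snd w, snd y @ fst w)))\<^sup>2)
           = (\<Sum>\<^sub>\<infinity>(k,m)\<in>idx c d. (cmod (F (k,m)))\<^sup>2)"
proof -
  show "(\<lambda>(w,y). (cmod (F (fst y @ snd w, snd y @ fst w)))\<^sup>2) summable_on idx i j \<times> idx (c-j) (d-i)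
           \<longleftrightarrow> (\<lambda>(k,m). (cmod (F (k,m)))\<^sup>2) summable_on idx c d"
    by (rule summable_on_reindex_bij_witness[where j="\<lambda>(w,y). (fst y @ snd w, snd y @ fst w)"
          and i="\<lambda>(k,m). ((drop (d-i) m, drop (c-j) k), (take (c-j) k, take (d-i) m))"])
       (use assms in \<open>auto simp: idx_def\<close>)
  show "(\<Sum>\<^sub>\<infinity>(w,y)\<in>idx i j \<times> idx (c-j) (d-i). (cmod (F (fst y @ snd w, snd y @ fst w)))\<^sup>2)
           = (\<Sum>\<^sub>\<infinity>(k,m)\<in>idx c d. (cmod (F (k,m)))\<^sup>2)"
    by (rule infsum_reindex_bij_witness[where j="\<lambda>(w,y). (fst y @ snd w, snd y @ fst w)"
          and i="\<lambda>(k,m). ((drop (d-i) m, drop (c-j) k), (take (c-j) k, take (d-i) m))"])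
       (use assms in \<open>auto simp: idx_def\<close>)
qed

theorem lemma3p7:
  fixes F1 F2 :: "'b::countable list \<times> 'b list \<Rightarrow> complex"
    and p1 q1 p2 q2 i j :: nat
  assumes f1: "in_sym_tensor p1 q1 F1"
    and f2: "in_sym_tensor p2 q2 F2"
    and hi: "i \<le> min p1 q2" and hj: "j \<le> min q1 p2"
  shows "tnorm (p1 + p2 - i - j) (q1 + q2 - i - j)
           (symmetrize (p1 + p2 - i - j) (q1 + q2 - i - j) (contr p1 q1 i j F1 F2))
         \<le> tnorm (p1 + p2 - i - j) (q1 + q2 - i - j) (contr p1 q1 i j F1 F2)
       \<and> tnorm (p1 + p2 - i - j) (q1 + q2 - i - j) (contr p1 q1 i j F1 F2)
         \<le> tnorm p1 q1 F1 * tnorm p2 q2 F2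
       \<and> (tnorm (p1 + p2 - i - j) (q1 + q2 - i - j) (contr p1 q1 i j F1 F2))\<^sup>2
         \<le> (1/2) * (tnorm (i + j) (i + j) (contr p1 q1 (p1 - i) (q1 - j) F1 (rev_conj F1)))\<^sup>2
          + (1/2) * (tnorm (i + j) (i + j) (contr p2 q2 (p2 - j) (q2 - i) F2 (rev_conj F2)))\<^sup>2"
proof -
  have ip: "i \<le> p1" "i \<le> q2" "j \<le> q1" "j \<le> p2" using hi hj by auto
  define n where "n = p1 + p2 - i - j"
  define m where "m = q1 + q2 - i - j"
  define X1 :: "('b list \<times> 'b list) set" where "X1 = idx (p1-i) (q1-j)"
  define W :: "('b list \<times> 'b list) set" where "W = idx i j"
  define Y2 :: "('b list \<times> 'b list) set" where "Y2 = idx (p2-j) (q2-i)"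
  define A where "A x w = F1 (fst x @ fst w, snd x @ snd w)" for x w :: "'b list \<times> 'b list"
  define B where "B w y = F2 (fst y @ snd w, snd y @ fst w)" for w y :: "'b list \<times> 'b list"
  define C where "C = contr p1 q1 i j F1 F2"
  have nn: "0 \<le> (\<Sum>\<^sub>\<infinity>(k,l)\<in>S. (cmod (F (k,l)))\<^sup>2)" for S and F :: "'b list \<times> 'b list \<Rightarrow> complex"
    by (rule infsum_nonneg) auto
  have tn2: "(tnorm a b F)\<^sup>2 = (\<Sum>\<^sub>\<infinity>(k,l)\<in>idx a b. (cmod (F (k,l)))\<^sup>2)" for a b and F :: "'b list \<times> 'b list \<Rightarrow> complex"
    unfolding tnorm_def by (rule real_sqrt_pow2[OF nn])
  have As: "(\<lambda>(x,w). (cmod (A x w))\<^sup>2) summable_on X1 \<times> W"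
    using reidx_A(1)[of i p1 j q1 F1] f1 ip unfolding A_def X1_def W_def in_sym_tensor_def in_tensor_def by simp
  have Ai: "(\<Sum>\<^sub>\<infinity>(x,w)\<in>X1\<times>W. (cmod (A x w))\<^sup>2) = (tnorm p1 q1 F1)\<^sup>2"
    using reidx_A(2)[of i p1 j q1 F1] ip unfolding A_def X1_def W_def tn2 by simp
  have Bs: "(\<lambda>(w,y). (cmod (B w y))\<^sup>2) summable_on W \<times> Y2"
    using reidx_B(1)[of i q2 j p2 F2] f2 ip unfolding B_def Y2_def W_def in_sym_tensor_def in_tensor_def by simp
  have Bi: "(\<Sum>\<^sub>\<infinity>(w,y)\<in>W\<times>Y2. (cmod (B w y))\<^sup>2) = (tnorm p2 q2 F2)\<^sup>2"
    using reidx_B(2)[of i q2 j p2 F2] ip unfolding B_def Y2_def W_def tn2 by simp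
  have Ceq: "C (t @ t', s @ s') = (\<Sum>\<^sub>\<infinity>w\<in>W. A (t,s) w * B w (t',s'))"
    if l: "length t = p1 - i" "length s = q1 - j" for t s t' s' :: "'b list"
    unfolding C_def contr_def W_def A_def B_def using l by (simp add: case_prod_unfold)
  have Cre1: "(\<lambda>(x,y). (cmod (\<Sum>\<^sub>\<infinity>w\<in>W. A x w * B w y))\<^sup>2) summable_on X1 \<times> Y2
      \<longleftrightarrow> (\<lambda>(k,l). (cmod (C (k,l)))\<^sup>2) summable_on idx n m"
    by (rule summable_on_reindex_bij_witness[where j="\<lambda>(x,y). (fst x @ fst y, snd x @ snd y)"
          and i="\<lambda>(k,l). ((take (p1-i) k, take (q1-j) l), (drop (p1-i) k, drop (q1-j) l))"])
       (use ip in \<open>auto simp: X1_def Y2_def idx_def n_def m_def Ceq\<close>)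
  have Cre2: "(\<Sum>\<^sub>\<infinity>(x,y)\<in>X1 \<times> Y2. (cmod (\<Sum>\<^sub>\<infinity>w\<in>W. A x w * B w y))\<^sup>2)
      = (\<Sum>\<^sub>\<infinity>(k,l)\<in>idx n m. (cmod (C (k,l)))\<^sup>2)"
    by (rule infsum_reindex_bij_witness[where j="\<lambda>(x,y). (fst x @ fst y, snd x @ snd y)"
          and i="\<lambda>(k,l). ((take (p1-i) k, take (q1-j) l), (drop (p1-i) k, drop (q1-j) l))"])
       (use ip in \<open>auto simp: X1_def Y2_def idx_def n_def m_def Ceq\<close>)
  define P where "P w w' = (\<Sum>\<^sub>\<infinity>x\<in>X1. cnj (A x w) * A x w')" for w w'
  define Q where "Q w w' = (\<Sum>\<^sub>\<infinity>y\<in>Y2. B w y * cnj (B w' y))" for w w'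
  define D1 where "D1 = contr p1 q1 (p1 - i) (q1 - j) F1 (rev_conj F1)"
  define D2 where "D2 = contr p2 q2 (p2 - j) (q2 - i) F2 (rev_conj F2)"
  have e1: "p1 - (p1 - i) = i" "q1 - (q1 - j) = j" "p2 - (p2 - j) = j" "q2 - (q2 - i) = i" using ip by auto
  have D1eq: "D1 (x1 @ x2, y1 @ y2) = P (y2, x2) (x1, y1)"
    if l: "length x1 = i" "length y1 = j" "length x2 = j" "length y2 = i" for x1 x2 y1 y2 :: "'b list"
  proof -
    have "D1 (x1 @ x2, y1 @ y2) = (\<Sum>\<^sub>\<infinity>(u,v)\<in>X1. F1 (x1 @ u, y1 @ v) * cnj (F1 (y2 @ u, x2 @ v)))"
      unfolding D1_def contr_def rev_conj_def X1_def using l e1 by simp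
    also have "\<dots> = P (y2,x2) (x1,y1)"
      unfolding P_def A_def X1_def
    proof (rule infsum_cong)
      fix z :: "'b list \<times> 'b list" assume z: "z \<in> idx (p1 - i) (q1 - j)"
      obtain u v where uv: "z = (u,v)" by (metis prod.collapse)
      have lu: "length u = p1 - i" "length v = q1 - j" using z uv by (auto simp: idx_def)
      have s1: "F1 (x1 @ u, y1 @ v) = F1 (u @ x1, v @ y1)" by (rule sym_swap[OF f1]) (use l lu ip in auto)
      have s2: "F1 (y2 @ u, x2 @ v) = F1 (u @ y2, v @ x2)" by (rule sym_swap[OF f1]) (use l lu ip in auto)
      show "(case z of (u, v) \<Rightarrow> F1 (x1 @ u, y1 @ v) * cnj (F1 (y2 @ u, x2 @ v))) =
            cnj (F1 (fst z @ fst (y2, x2), snd z @ snd (y2, x2))) * F1 (fst z @ fst (x1, y1), snd z @ snd (x1, y1))"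
        unfolding uv using s1 s2 by (simp add: mult.commute)
    qed
    finally show ?thesis .
  qed
  have D2eq: "D2 (x1 @ x2, y1 @ y2) = Q (y1, x1) (x2, y2)"
    if l: "length x1 = j" "length y1 = i" "length x2 = i" "length y2 = j" for x1 x2 y1 y2 :: "'b list"
  proof -
    have "D2 (x1 @ x2, y1 @ y2) = (\<Sum>\<^sub>\<infinity>(u,v)\<in>Y2. F2 (x1 @ u, y1 @ v) * cnj (F2 (y2 @ u, x2 @ v)))"
      unfolding D2_def contr_def rev_conj_def Y2_def using l e1 by simp
    also have "\<dots> = Q (y1,x1) (x2,y2)"
      unfolding Q_def B_def Y2_def
    proof (rule infsum_cong)
      fix z :: "'b list \<times> 'b list" assume z: "z \<in> idx (p2 - j) (q2 - i)"
      obtain u v where uv: "z = (u,v)" by (metis prod.collapse)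
      have lu: "length u = p2 - j" "length v = q2 - i" using z uv by (auto simp: idx_def)
      have s1: "F2 (x1 @ u, y1 @ v) = F2 (u @ x1, v @ y1)" by (rule sym_swap[OF f2]) (use l lu ip in auto)
      have s2: "F2 (y2 @ u, x2 @ v) = F2 (u @ y2, v @ x2)" by (rule sym_swap[OF f2]) (use l lu ip in auto)
      show "(case z of (u, v) \<Rightarrow> F2 (x1 @ u, y1 @ v) * cnj (F2 (y2 @ u, x2 @ v))) =
            F2 (fst z @ snd (y1, x1), snd z @ fst (y1, x1)) * cnj (F2 (fst z @ snd (x2, y2), snd z @ fst (x2, y2)))"
        unfolding uv using s1 s2 by simp
    qed
    finally show ?thesis .
  qed
  have Pre: "(\<Sum>\<^sub>\<infinity>(w,w')\<in>W\<times>W. (cmod (P w w'))\<^sup>2) = (\<Sum>\<^sub>\<infinity>(k,l)\<in>idx (i+j) (i+j). (cmod (D1 (k,l)))\<^sup>2)"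
    by (rule infsum_reindex_bij_witness[where j="\<lambda>(w,w'). (fst w' @ snd w, snd w' @ fst w)"
          and i="\<lambda>(k,l). ((drop j l, drop i k), (take i k, take j l))"])
       (auto simp: W_def idx_def D1eq)
  have Qre: "(\<Sum>\<^sub>\<infinity>(w,w')\<in>W\<times>W. (cmod (Q w w'))\<^sup>2) = (\<Sum>\<^sub>\<infinity>(k,l)\<in>idx (i+j) (i+j). (cmod (D2 (k,l)))\<^sup>2)"
    by (rule infsum_reindex_bij_witness[where j="\<lambda>(w,w'). (snd w @ fst w', fst w @ snd w')"
          and i="\<lambda>(k,l). ((take i l, take j k), (drop j k, drop i l))"])
       (auto simp: W_def idx_def D2eq)
  have CSn: "(\<lambda>(k,l). (cmod (C (k,l)))\<^sup>2) summable_on idx n m"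
    using Cre1 hs_prod_summable[OF As Bs] by simp
  have C2: "(tnorm n m C)\<^sup>2 = (\<Sum>\<^sub>\<infinity>(x,y)\<in>X1 \<times> Y2. (cmod (\<Sum>\<^sub>\<infinity>w\<in>W. A x w * B w y))\<^sup>2)"
    unfolding tn2 Cre2 ..
  have g1: "tnorm n m (symmetrize n m C) \<le> tnorm n m C"
    unfolding tnorm_def by (rule real_sqrt_le_mono[OF sym_bound[OF CSn]])
  have "(tnorm n m C)\<^sup>2 \<le> (tnorm p1 q1 F1 * tnorm p2 q2 F2)\<^sup>2"
    unfolding C2 power_mult_distrib Ai[symmetric] Bi[symmetric] by (rule hs_prod_le[OF As Bs])
  hence g2: "tnorm n m C \<le> tnorm p1 q1 F1 * tnorm p2 q2 F2"
    by (rule power2_le_imp_le) (simp add: tnorm_def nn)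
  have g3: "(tnorm n m C)\<^sup>2 \<le> (1/2) * (tnorm (i + j) (i + j) D1)\<^sup>2 + (1/2) * (tnorm (i + j) (i + j) D2)\<^sup>2"
  proof -
    have "(tnorm n m C)\<^sup>2 = (\<Sum>\<^sub>\<infinity>(x,y)\<in>X1 \<times> Y2. (cmod (\<Sum>\<^sub>\<infinity>w\<in>W. A x w * B w y))\<^sup>2)" by (rule C2)
    also have "\<dots> \<le> (1/2) * (\<Sum>\<^sub>\<infinity>(w,w')\<in>W\<times>W. (cmod (P w w'))\<^sup>2) + (1/2) * (\<Sum>\<^sub>\<infinity>(w,w')\<in>W\<times>W. (cmod (Q w w'))\<^sup>2)"
      unfolding P_def Q_def by (rule hs_third[OF As Bs])
    also have "\<dots> = (1/2) * (tnorm (i + j) (i + j) D1)\<^sup>2 + (1/2) * (tnorm (i + j) (i + j) D2)\<^sup>2"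
      unfolding Pre Qre tn2 ..
    finally show ?thesis .
  qed
  have "tnorm n m (symmetrize n m C) \<le> tnorm n m C \<and> tnorm n m C \<le> tnorm p1 q1 F1 * tnorm p2 q2 F2
     \<and> (tnorm n m C)\<^sup>2 \<le> (1/2) * (tnorm (i + j) (i + j) D1)\<^sup>2 + (1/2) * (tnorm (i + j) (i + j) D2)\<^sup>2"
    using g1 g2 g3 by blast
  thus ?thesis unfolding n_def m_def C_def D1_def D2_def .
qed

end
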